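(* Let $F_0$ be a cdf and $\mathbb{F}$ a set of measurable functions $\mathbb{R}_+\to\mathbb{R}$ such that conditions (C1), (C2), (C3), (C4) hold, with $\mathbb{P}^*$ and $\ell^*$ as in (C3)–(C4), and assume moreover that $F_0^{-1}\circ F_{\ell^*}^{\mathbb{P}^*}\in\mathbb{F}$. Then the $\mathbb{F}$-robust cost-efficiency problem for $F_0$ has a $\mathbb{P}^*$-a.s. unique solution, given by $$X^*=F_0^{-1}\big(F_{\ell^*}^{\mathbb{P}^*}(\ell^* )\big).$$
   Context: Standing setting: fix $T>0$, $r\in\mathbb{R}$, $S_0>0$, and write $\mathbb{R}_+=[0,\infty)$. Let $S_T:\Omega\to\mathbb{R}_+$ be a random variable and $\mathcal{F}=\sigma(S_T)$. $\mathcal{P}$ is a set of mutually equivalent probability measures on $(\Omega,\mathcal{F})$, and $\mathbb{Q}$ is a probability measure on $(\Omega,\mathcal{F})$ equivalent to every $\mathbb{P}\in\mathcal{P}$. The set of payoffs is $\mathcal{X}=\{g(S_T): g:\mathbb{R}_+\to\mathbb{R}_+\text{ measurable}, E_{\mathbb{Q}}[|g(S_T)|]<\infty\}$, and the price of $X\in\mathcal{X}$ is $e^{-rT}E_{\mathbb{Q}}[X]$. For $\mathbb{P}\in\mathcal{P}$ let $\ell^{\mathbb{P}}=d\mathbb{P}/d\mathbb{Q}$. $F_X^{\mathbb{P}}$ denotes the cdf of $X$ under $\mathbb{P}$; for a cdf $F$, $F^{-1}(p)=\inf\{x:F(x)\ge p\}$. Integral stochastic ordering: for a set $\mathbb{F}$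 of measurable functions $\mathbb{R}_+\to\mathbb{R}$ and cdfs $F,G$ supported on $\mathbb{R}_+$, $F\preceq_{\mathbb{F}}G$ means $\int f\,dF\le\int f\,dG$ for all $f\in\mathbb{F}$ for which the integrals are finite. Robust cost-efficiency problem: $\inf\{e^{-rT}E_{\mathbb{Q}}[X]: X\in\mathcal{B}^{\mathbb{F}}_{F_0}\}$ where $\mathcal{B}^{\mathbb{F}}_{F_0}=\{X\in\mathcal{X}: F_0\preceq_{\mathbb{F}}F_X^{\mathbb{P}}\text{ for all }\mathbb{P}\in\mathcal{P}\}$. Standard cost-efficiency: for $\mathbb{P}\in\mathcal{P}$, the standard problem for $F_0$ is $\inf\{e^{-rT}E_{\mathbb{Q}}[X]:X\in\mathcal{X},F_X^{\mathbb{P}}=F_0\}$; $X$ is $\mathbb{P}$-cost-efficient if it solves this problem for $F_0=F_X^{\mathbb{P}}$. $\mathbb{F}$ is composition-consistent if $f,g\in\mathbb{F}\Rightarrow f\circ g\in\mathbb{F}$. $\mathbb{F}$ is cost-consistent if for all $X,Y\in\mathcal{X}$ and $\mathbb{P}\in\mathcal{P}$ with $X,Y$ both $\mathbb{P}$-cost-efficient, $F_X^{\mathbb{P}}\preceq_{\mathbb{F}}F_Y^{\mathbb{P}}$ implies $E_{\mathbb{Q}}[X]\le E_{\mathbb{Q}}[Y]$, with strict inequality if additionally $F_X^{\mathbb{P}}\neq F_Y^{\mathbb{P}}$. A measure $\mathbb{P}^*\in\mathcal{P}$ with $\ell^*=d\mathbb{P}^*/d\mathbb{Q}$ is least favorable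 w.r.t. $\mathbb{F}$ if $F_{\ell^*}^{\mathbb{P}^*}\preceq_{\mathbb{F}}F_{\ell^*}^{\mathbb{P}}$ for all $\mathbb{P}\in\mathcal{P}$. Conditions: (C1) $\int_0^1(F_0^{-1}(u))^2du<\infty$ and $F_0(x)=0$ for $x<0$. (C2) $\mathbb{F}$ is composition-consistent and cost-consistent. (C3) $\mathcal{P}$ contains a least favorable measure $\mathbb{P}^*$ w.r.t. $\mathbb{F}$. (C4) With $\ell^*=d\mathbb{P}^*/d\mathbb{Q}$, the map $x\mapsto F^{\mathbb{P}^*}_{\ell^*}(x)$ is continuous and $1/\ell^*$ has finite variance under $\mathbb{P}^*$. *)

theory Defs
  imports "HOL-Probability.Probability"
begin

definition is_cdf :: "(real \<Rightarrow> real) \<Rightarrow> bool" where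
  "is_cdf F \<longleftrightarrow> mono F \<and> (\<forall>x. continuous (at_right x) F)
      \<and> (F \<longlongrightarrow> 0) at_bot \<and> (F \<longlongrightarrow> 1) at_top"

definition quantile :: "(real \<Rightarrow> real) \<Rightarrow> real \<Rightarrow> real" where
  "quantile F p = Inf {x. p \<le> F x}"

definition cdf_of :: "'a measure \<Rightarrow> ('a \<Rightarrow> real) \<Rightarrow> real \<Rightarrow> real" where
  "cdf_of P X = cdf (distr P borel X)"

definition stoch_le :: "(real \<Rightarrow> real) set \<Rightarrow> (real \<Rightarrow> real) \<Rightarrow> (real \<Rightarrow> real) \<Rightarrow> bool" where
  "stoch_le FF F G \<longleftrightarrow> (\<forall>f\<in>FF. integrable (interval_measure F) f \<and> integrable (interval_measure G) f
       \<longrightarrow> (\<integral>x. f x \<partial>interval_measure F) \<le> (\<integral>x. f x \<partial>interval_measure G))"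

definition lr :: "'a measure \<Rightarrow> 'a measure \<Rightarrow> 'a \<Rightarrow> real" where
  "lr Q P = (\<lambda>\<omega>. enn2real (RN_deriv Q P \<omega>))"

definition payoffs :: "'a measure \<Rightarrow> ('a \<Rightarrow> real) \<Rightarrow> ('a \<Rightarrow> real) set" where
  "payoffs Q S = {X. (\<exists>g. g \<in> borel_measurable borel \<and> (\<forall>x\<ge>0. 0 \<le> g x)
        \<and> (\<forall>\<omega>\<in>space Q. X \<omega> = g (S \<omega>))) \<and> integrable Q X}"

definition price :: "real \<Rightarrow> real \<Rightarrow> 'a measure \<Rightarrow> ('a \<Rightarrow> real) \<Rightarrow> real" where
  "price r T Q X = exp (- r * T) * (\<integral>\<omega>. X \<omega> \<partial>Q)"

definition cost_efficient ::
  "real \<Rightarrow> real \<Rightarrow> 'a measure \<Rightarrow> ('a \<Rightarrow> real) \<Rightarrow> 'a measure \<Rightarrow> ('a \<Rightarrow> real) \<Rightarrow> bool" where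
  "cost_efficient r T Q S P X \<longleftrightarrow> X \<in> payoffs Q S \<and>
     (\<forall>Y\<in>payoffs Q S. cdf_of P Y = cdf_of P X \<longrightarrow> price r T Q X \<le> price r T Q Y)"

definition composition_consistent :: "(real \<Rightarrow> real) set \<Rightarrow> bool" where
  "composition_consistent FF \<longleftrightarrow> (\<forall>f\<in>FF. \<forall>g\<in>FF. f \<circ> g \<in> FF)"

definition cost_consistent ::
  "real \<Rightarrow> real \<Rightarrow> 'a measure \<Rightarrow> ('a \<Rightarrow> real) \<Rightarrow> 'a measure set \<Rightarrow> (real \<Rightarrow> real) set \<Rightarrow> bool" where
  "cost_consistent r T Q S PP FF \<longleftrightarrow>
     (\<forall>X\<in>payoffs Q S. \<forall>Y\<in>payoffs Q S. \<forall>P\<in>PP.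
        cost_efficient r T Q S P X \<and> cost_efficient r T Q S P Y \<and>
        stoch_le FF (cdf_of P X) (cdf_of P Y) \<longrightarrow>
          (\<integral>\<omega>. X \<omega> \<partial>Q) \<le> (\<integral>\<omega>. Y \<omega> \<partial>Q) \<and>
          (cdf_of P X \<noteq> cdf_of P Y \<longrightarrow> (\<integral>\<omega>. X \<omega> \<partial>Q) < (\<integral>\<omega>. Y \<omega> \<partial>Q)))"

definition least_favorable ::
  "'a measure \<Rightarrow> 'a measure set \<Rightarrow> (real \<Rightarrow> real) set \<Rightarrow> 'a measure \<Rightarrow> bool" where
  "least_favorable Q PP FF Ps \<longleftrightarrow> Ps \<in> PP \<and>
     (\<forall>P\<in>PP. stoch_le FF (cdf_of Ps (lr Q Ps)) (cdf_of P (lr Q Ps)))"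

definition robust_feasible ::
  "'a measure \<Rightarrow> ('a \<Rightarrow> real) \<Rightarrow> 'a measure set \<Rightarrow> (real \<Rightarrow> real) set \<Rightarrow> (real \<Rightarrow> real) \<Rightarrow> ('a \<Rightarrow> real) set" where
  "robust_feasible Q S PP FF F0 = {X \<in> payoffs Q S. \<forall>P\<in>PP. stoch_le FF F0 (cdf_of P X)}"

definition robust_solution ::
  "real \<Rightarrow> real \<Rightarrow> 'a measure \<Rightarrow> ('a \<Rightarrow> real) \<Rightarrow> 'a measure set \<Rightarrow> (real \<Rightarrow> real) set
     \<Rightarrow> (real \<Rightarrow> real) \<Rightarrow> ('a \<Rightarrow> real) \<Rightarrow> bool" where
  "robust_solution r T Q S PP FF F0 X \<longleftrightarrow> X \<in> robust_feasible Q S PP FF F0 \<and>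
     (\<forall>Y\<in>robust_feasible Q S PP FF F0. price r T Q X \<le> price r T Q Y)"

end

theory Submission
  imports Defs
begin


lemma quantile_props:
  fixes G :: "real \<Rightarrow> real"
  assumes mono: "mono G" and rc: "\<And>x. continuous (at_right x) G"
    and bot: "(G \<longlongrightarrow> 0) at_bot" and top: "(G \<longlongrightarrow> 1) at_top"
    and u: "0 < u" "u < 1"
  shows "quantile G u \<le> t \<longleftrightarrow> u \<le> G t"
proof -
  let ?A = "{x. u \<le> G x}"
  have ne: "?A \<noteq> {}"
  proof -
    have "eventually (\<lambda>x. G x > u) at_top" using order_tendstoD(1)[OF top u(2)] .
    then obtain b where "\<And>x. x \<ge> b \<Longrightarrow> G x > u" by (auto simp: eventually_at_top_linorder)
    then show ?thesis by (metis empty_iff less_imp_le mem_Collect_eq order_refl)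
  qed
  have bdd: "bdd_below ?A"
  proof -
    have "eventually (\<lambda>x. G x < u) at_bot" using order_tendstoD(2)[OF bot u(1)] .
    then obtain b where b: "\<And>x. x \<le> b \<Longrightarrow> G x < u" by (auto simp: eventually_at_bot_linorder)
    have "\<forall>x\<in>?A. b \<le> x"
    proof
      fix x assume "x \<in> ?A"
      then show "b \<le> x" using b[of x] by (cases "x \<le> b") auto
    qed
    then show ?thesis by (auto simp: bdd_below_def)
  qed
  have inA: "u \<le> G (Inf ?A)"
  proof (rule ccontr)
    assume "\<not> u \<le> G (Inf ?A)"
    hence lt: "G (Inf ?A) < u" by simp
    have "(G \<longlongrightarrow> G (Inf ?A)) (at_right (Inf ?A))" using rc[of "Inf ?A"] by (simp add: continuous_within)
    from order_tendstoD(2)[OF this lt]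
    obtain b where b: "b > Inf ?A" "\<And>y. Inf ?A < y \<Longrightarrow> y < b \<Longrightarrow> G y < u"
      by (auto simp: eventually_at_right_field)
    have "\<forall>x\<in>?A. (Inf ?A + b)/2 \<le> x"
    proof
      fix x assume x: "x \<in> ?A"
      show "(Inf ?A + b)/2 \<le> x"
      proof (rule ccontr)
        assume "\<not> ?thesis"
        hence "x < (Inf ?A + b)/2" by simp
        have "Inf ?A \<le> x" using cInf_lower[OF x bdd] .
        have "G x \<le> G ((Inf ?A + b)/2)" using mono \<open>x < _\<close> by (simp add: monoD)
        also have "\<dots> < u" using b by auto
        finally show False using x by simp
      qed
    qed
    hence "(Inf ?A + b)/2 \<le> Inf ?A" using ne by (intro cInf_greatest) auto
    thus False using b by simp
  qed
  show ?thesis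
  proof
    assume "quantile G u \<le> t"
    thus "u \<le> G t" using inA mono unfolding quantile_def by (meson monoD order_trans)
  next
    assume "u \<le> G t"
    thus "quantile G u \<le> t" unfolding quantile_def by (intro cInf_lower[OF _ bdd]) auto
  qed
qed

lemma quantile_nonneg:
  fixes G :: "real \<Rightarrow> real"
  assumes "\<forall>x<0. G x = 0" and "0 < u" and "\<exists>x. u \<le> G x"
  shows "0 \<le> quantile G u"
  unfolding quantile_def
proof (rule cInf_greatest)
  show "{x. u \<le> G x} \<noteq> {}" using assms by auto
  fix x assume "x \<in> {x. u \<le> G x}"
  thus "0 \<le> x" using assms by (metis leI less_le_not_le mem_Collect_eq)
qed

lemma quantile_mono:
  fixes G :: "real \<Rightarrow> real"
  assumes mono: "mono G" and rc: "\<And>x. continuous (at_right x) G"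
    and bot: "(G \<longlongrightarrow> 0) at_bot" and top: "(G \<longlongrightarrow> 1) at_top"
  shows "mono_on {0<..<1} (quantile G)"
proof (rule mono_onI)
  fix u v :: real assume "u \<in> {0<..<1}" "v \<in> {0<..<1}" "u \<le> v"
  have "v \<le> G (quantile G v)" using quantile_props[OF assms, of v "quantile G v"] \<open>v \<in> _\<close> by simp
  thus "quantile G u \<le> quantile G v"
    using quantile_props[OF assms, of u] \<open>u \<in> _\<close> \<open>u \<le> v\<close> by simp
qed

lemma is_cdf_cdf:
  assumes "real_distribution M"
  shows "is_cdf (cdf M)"
proof -
  interpret real_distribution M by fact
  show ?thesis unfolding is_cdf_def
    using cdf_nondecreasing cdf_is_right_cont cdf_lim_at_bot cdf_lim_at_top_prob
    by (auto simp: mono_def)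
qed

lemma interval_measure_cdf:
  assumes "real_distribution M"
  shows "interval_measure (cdf M) = M"
proof -
  have c: "is_cdf (cdf M)" by (rule is_cdf_cdf[OF assms])
  show ?thesis
  proof (rule cdf_unique[OF _ assms])
    show "real_distribution (interval_measure (cdf M))"
      using c unfolding is_cdf_def by (intro real_distribution_interval_measure) (auto simp: mono_def)
    show "cdf (interval_measure (cdf M)) = cdf M"
      using c unfolding is_cdf_def by (intro cdf_interval_measure) (auto simp: mono_def)
  qed
qed

lemma interval_measure_is_cdf:
  assumes "is_cdf F" shows "real_distribution (interval_measure F)" "cdf (interval_measure F) = F"
  using assms unfolding is_cdf_def
  by (auto intro!: real_distribution_interval_measure cdf_interval_measure simp: mono_def)




locale unif_setup = prob_space M for M :: "'a measure" +
  fixes L :: "'a \<Rightarrow> real"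
  assumes L_meas[measurable]: "L \<in> borel_measurable M"
    and Fcont: "continuous_on UNIV (cdf (distr M borel L))"
begin

abbreviation "FL \<equiv> cdf (distr M borel L)"

lemma rd: "real_distribution (distr M borel L)" by simp

lemma FL_mono: "x \<le> y \<Longrightarrow> FL x \<le> FL y"
  using finite_borel_measure.cdf_nondecreasing[OF real_distribution.finite_borel_measure_M[OF rd]] by blast

lemma FL_bounds: "0 \<le> FL x" "FL x \<le> 1"
  using finite_borel_measure.cdf_nonneg[OF real_distribution.finite_borel_measure_M[OF rd]] real_distribution.cdf_bounded_prob[OF rd] by auto

lemma FL_meas[measurable]: "FL \<in> borel_measurable borel"
  using Fcont by (intro borel_measurable_continuous_onI) (auto simp: continuous_on_eq_continuous_within)

lemma FL_at_bot: "(FL \<longlongrightarrow> 0) at_bot" using finite_borel_measure.cdf_lim_at_bot[OF real_distribution.finite_borel_measure_M[OF rd]] .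
lemma FL_at_top: "(FL \<longlongrightarrow> 1) at_top" using real_distribution.cdf_lim_at_top_prob[OF rd] .

lemma FL_eq: "FL x = prob {\<omega>\<in>space M. L \<omega> \<le> x}"
  by (simp add: cdf_def measure_distr vimage_def Int_def conj_commute)

lemma U_le_mid:
  assumes a: "0 < a" "a < 1"
  shows "prob {\<omega>\<in>space M. FL (L \<omega>) \<le> a} = a"
proof -
  let ?C = "{x. FL x \<le> a}"
  have ne: "?C \<noteq> {}"
  proof -
    have "eventually (\<lambda>x. FL x < a) at_bot" using order_tendstoD(2)[OF FL_at_bot a(1)] .
    then obtain b where "\<And>x. x \<le> b \<Longrightarrow> FL x < a" by (auto simp: eventually_at_bot_linorder)
    then show ?thesis by (metis empty_iff less_imp_le mem_Collect_eq order_refl)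
  qed
  have bdd: "bdd_above ?C"
  proof -
    have "eventually (\<lambda>x. FL x > a) at_top" using order_tendstoD(1)[OF FL_at_top a(2)] .
    then obtain b where b: "\<And>x. x \<ge> b \<Longrightarrow> FL x > a" by (auto simp: eventually_at_top_linorder)
    have "\<forall>x\<in>?C. x \<le> b"
    proof
      fix x assume "x \<in> ?C"
      then show "x \<le> b" using b[of x] by (cases "b \<le> x") auto
    qed
    then show ?thesis by (auto simp: bdd_above_def)
  qed
  define c where "c = Sup ?C"
  have closed: "closed ?C"
    using Fcont by (intro closed_Collect_le) (auto intro: continuous_on_const)
  have cC: "c \<in> ?C" unfolding c_def by (rule closed_contains_Sup[OF ne bdd closed])
  have gt: "FL x > a" if "x > c" for x
  proof (rule ccontr)
    assume "\<not> FL x > a"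
    hence "x \<in> ?C" by simp
    hence "x \<le> c" unfolding c_def by (rule cSup_upper[OF _ bdd])
    thus False using that by simp
  qed
  have Fc: "FL c = a"
  proof (rule ccontr)
    assume "FL c \<noteq> a"
    hence lt: "FL c < a" using cC by simp
    have "isCont FL c" using Fcont by (simp add: continuous_on_eq_continuous_at)
    hence "(FL \<longlongrightarrow> FL c) (at_right c)" by (simp add: isCont_def filterlim_at_split)
    from order_tendstoD(2)[OF this lt]
    obtain b where b: "b > c" "\<And>y. c < y \<Longrightarrow> y < b \<Longrightarrow> FL y < a"
      by (auto simp: eventually_at_right_field)
    have "FL ((c+b)/2) < a" using b by auto
    moreover have "FL ((c+b)/2) > a" using gt b by auto
    ultimately show False by simp
  qed
  have "{\<omega>\<in>space M. FL (L \<omega>) \<le> a} = {\<omega>\<in>space M. L \<omega> \<le> c}"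
  proof -
    have "FL (L \<omega>) \<le> a \<longleftrightarrow> L \<omega> \<le> c" for \<omega>
      using FL_mono[of "L \<omega>" c] Fc gt[of "L \<omega>"] by (cases "L \<omega> \<le> c") auto
    thus ?thesis by auto
  qed
  thus ?thesis using FL_eq[of c] Fc by simp
qed

lemma U_le_0: "prob {\<omega>\<in>space M. FL (L \<omega>) \<le> 0} = 0"
proof (rule ccontr)
  let ?p = "prob {\<omega>\<in>space M. FL (L \<omega>) \<le> 0}"
  assume "?p \<noteq> 0"
  hence p: "?p > 0" using measure_nonneg[of M] by (simp add: order_less_le)
  define e where "e = min (?p/2) (1/2)"
  have "e \<le> 1/2" "e \<le> ?p/2" by (simp_all add: e_def)
  moreover have "0 < e" using p by (simp add: e_def)
  ultimately have e: "0 < e" "e < 1" "e < ?p" using p by auto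
  have "?p \<le> prob {\<omega>\<in>space M. FL (L \<omega>) \<le> e}"
    using e by (intro finite_measure_mono) auto
  also have "\<dots> = e" using U_le_mid e by simp
  finally show False using e by simp
qed

lemma U_le_1: "prob {\<omega>\<in>space M. FL (L \<omega>) \<le> 1} = 1"
  using FL_bounds by (simp add: prob_space)

lemma U_le: assumes "0 \<le> a" "a \<le> 1" shows "prob {\<omega>\<in>space M. FL (L \<omega>) \<le> a} = a"
  using assms U_le_mid U_le_0 U_le_1 by (cases "a = 0"; cases "a = 1") auto

lemma U_ge_1: "prob {\<omega>\<in>space M. 1 \<le> FL (L \<omega>)} = 0"
proof (rule ccontr)
  let ?p = "prob {\<omega>\<in>space M. 1 \<le> FL (L \<omega>)}"
  assume "?p \<noteq> 0"
  hence p: "?p > 0" using measure_nonneg[of M] by (simp add: order_less_le)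
  define e where "e = min (?p/2) (1/2)"
  have "e \<le> 1/2" "e \<le> ?p/2" by (simp_all add: e_def)
  moreover have "0 < e" using p by (simp add: e_def)
  ultimately have e: "0 < e" "e < 1" "e < ?p" using p by auto
  have "?p \<le> prob {\<omega>\<in>space M. \<not> FL (L \<omega>) \<le> 1 - e}"
    using e by (intro finite_measure_mono) auto
  also have "\<dots> = 1 - prob {\<omega>\<in>space M. FL (L \<omega>) \<le> 1 - e}"
    by (subst prob_compl[symmetric]) (auto intro!: arg_cong[where f=prob])
  also have "\<dots> = e" using U_le e by simp
  finally show False using e by simp
qed

lemma AE_U: "AE \<omega> in M. 0 < FL (L \<omega>) \<and> FL (L \<omega>) < 1"
proof -
  have "AE \<omega> in M. \<not> FL (L \<omega>) \<le> 0"
    using U_le_0 by (subst AE_iff_measurable[OF _ refl]) (auto simp: emeasure_eq_measure)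
  moreover have "AE \<omega> in M. \<not> 1 \<le> FL (L \<omega>)"
    using U_ge_1 by (subst AE_iff_measurable[OF _ refl]) (auto simp: emeasure_eq_measure)
  ultimately show ?thesis by eventually_elim auto
qed

lemma U_gt: assumes "0 \<le> a" "a \<le> 1" shows "prob {\<omega>\<in>space M. a < FL (L \<omega>)} = 1 - a"
proof -
  have "prob {\<omega>\<in>space M. a < FL (L \<omega>)} = 1 - prob {\<omega>\<in>space M. FL (L \<omega>) \<le> a}"
    by (subst prob_compl[symmetric]) (auto intro!: arg_cong[where f=prob])
  thus ?thesis using U_le[OF assms] by simp
qed

lemma L_atom: "prob {\<omega>\<in>space M. L \<omega> = c} = 0"
proof -
  have "isCont FL c" using Fcont by (simp add: continuous_on_eq_continuous_at)
  hence "measure (distr M borel L) {c} = 0"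
    using finite_borel_measure.isCont_cdf[OF real_distribution.finite_borel_measure_M[OF rd]] by blast
  thus ?thesis by (simp add: measure_distr vimage_def Int_def conj_commute)
qed

end



locale rearr = unif_setup +
  assumes Lpos: "AE \<omega> in M. 0 < L \<omega>"
    and Wint: "integrable M (\<lambda>\<omega>. 1 / L \<omega>)"
begin

lemma prob0_null: "A \<in> sets M \<Longrightarrow> prob A = 0 \<Longrightarrow> A \<in> null_sets M"
  by (simp add: null_sets_def emeasure_eq_measure)

lemma NP:
  assumes A[measurable]: "A \<in> sets M" and B[measurable]: "B \<in> sets M" and eq: "prob A = prob B"
    and sep: "\<And>\<omega> \<omega>'. \<omega> \<in> B \<Longrightarrow> \<omega>' \<in> space M - B \<Longrightarrow> L \<omega>' < L \<omega>"
  shows "(\<integral>\<omega>. indicator B \<omega> * (1 / L \<omega>) \<partial>M) \<le> (\<integral>\<omega>. indicator A \<omega> * (1 / L \<omega>) \<partial>M)"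
    and "(\<integral>\<omega>. indicator B \<omega> * (1 / L \<omega>) \<partial>M) = (\<integral>\<omega>. indicator A \<omega> * (1 / L \<omega>) \<partial>M)
          \<Longrightarrow> AE \<omega> in M. (\<omega> \<in> A \<longleftrightarrow> \<omega> \<in> B)"
proof -
  have intA: "integrable M (\<lambda>\<omega>. indicator A \<omega> * (1 / L \<omega>))"
    using integrable_real_mult_indicator[OF _ Wint] by (simp add: mult.commute)
  have intB: "integrable M (\<lambda>\<omega>. indicator B \<omega> * (1 / L \<omega>))"
    using integrable_real_mult_indicator[OF _ Wint] by (simp add: mult.commute)
  have "(\<integral>\<omega>. indicator B \<omega> * (1 / L \<omega>) \<partial>M) \<le> (\<integral>\<omega>. indicator A \<omega> * (1 / L \<omega>) \<partial>M) \<and>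
    ((\<integral>\<omega>. indicator B \<omega> * (1 / L \<omega>) \<partial>M) = (\<integral>\<omega>. indicator A \<omega> * (1 / L \<omega>) \<partial>M)
          \<longrightarrow> (AE \<omega> in M. (\<omega> \<in> A \<longleftrightarrow> \<omega> \<in> B)))"
  proof (cases "prob (space M - B) = 0 \<or> prob B = 0")
    case True
    have "AE \<omega> in M. (\<omega> \<in> A \<longleftrightarrow> \<omega> \<in> B)"
    proof (cases "prob B = 0")
      case True
      hence "prob A = 0" using eq by simp
      hence "AE \<omega> in M. \<omega> \<notin> A" "AE \<omega> in M. \<omega> \<notin> B" using True
        by (auto intro!: AE_not_in prob0_null)
      thus ?thesis by eventually_elim auto
    next
      case False
      hence c: "prob (space M - B) = 0" using \<open>prob (space M - B) = 0 \<or> prob B = 0\<close> by simp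
      hence "prob B = 1" using prob_compl[OF B] by simp
      hence "prob (space M - A) = 0" using eq prob_compl[OF A] by simp
      hence "space M - A \<in> null_sets M" "space M - B \<in> null_sets M" using c
        by (auto intro!: prob0_null)
      from AE_not_in[OF this(1)] AE_not_in[OF this(2)] AE_space
      show ?thesis by eventually_elim auto
    qed
    moreover from this have "(\<integral>\<omega>. indicator B \<omega> * (1 / L \<omega>) \<partial>M) = (\<integral>\<omega>. indicator A \<omega> * (1 / L \<omega>) \<partial>M)"
      by (intro integral_cong_AE) (auto elim!: eventually_mono simp: indicator_def)
    ultimately show ?thesis by simp
  next
    case False
    hence pc: "prob (space M - B) \<noteq> 0" and pB: "prob B \<noteq> 0" by auto
    obtain \<omega>0 where \<omega>0: "\<omega>0 \<in> B" using pB by fastforce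
    have "\<exists>\<omega>1\<in>space M - B. 0 < L \<omega>1"
    proof (rule ccontr)
      assume "\<not> ?thesis"
      hence "space M - B \<subseteq> {\<omega>\<in>space M. \<not> 0 < L \<omega>}" by auto
      moreover have "{\<omega>\<in>space M. \<not> 0 < L \<omega>} \<in> null_sets M"
        using Lpos by (subst AE_iff_null[symmetric]) auto
      ultimately have "space M - B \<in> null_sets M"
        using null_sets_subset[of "{\<omega>\<in>space M. \<not> 0 < L \<omega>}" M "space M - B"] by auto
      thus False using pc by (auto simp: null_sets_def emeasure_eq_measure)
    qed
    then obtain \<omega>1 where \<omega>1: "\<omega>1 \<in> space M - B" "0 < L \<omega>1" by blast
    define c where "c = Sup (L ` (space M - B))"
    have bdd: "bdd_above (L ` (space M - B))"
      using sep[OF \<omega>0] by (auto simp: bdd_above_def intro!: exI[of _ "L \<omega>0"] less_imp_le)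
    have c1: "\<And>\<omega>. \<omega> \<in> space M - B \<Longrightarrow> L \<omega> \<le> c" unfolding c_def using bdd by (auto intro: cSup_upper)
    have c2: "\<And>\<omega>. \<omega> \<in> B \<Longrightarrow> c \<le> L \<omega>" unfolding c_def using \<omega>1 sep
      by (intro cSup_least) (auto intro: less_imp_le)
    have cpos: "0 < c" using c1[OF \<omega>1(1)] \<omega>1(2) by simp
    define g where "g \<omega> = (indicator A \<omega> - indicator B \<omega>) * (1 / L \<omega> - 1 / c)" for \<omega>
    have gnn: "AE \<omega> in M. 0 \<le> g \<omega>"
      using Lpos
    proof eventually_elim
      case (elim \<omega>)
      show ?case
      proof (cases "\<omega> \<in> space M")
        case True
        thus ?thesis using c1[of \<omega>] c2[of \<omega>] elim cpos
          by (auto simp: g_def indicator_def divide_simps)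
      next
        case False
        thus ?thesis using A B sets.sets_into_space[OF A] sets.sets_into_space[OF B]
          by (auto simp: g_def indicator_def)
      qed
    qed
    have eqg: "g = (\<lambda>\<omega>. indicator A \<omega> * (1 / L \<omega>) - indicator B \<omega> * (1 / L \<omega>)
              - (1/c) * indicator A \<omega> + (1/c) * indicator B \<omega>)"
      by (auto simp: g_def fun_eq_iff algebra_simps)
    have iA: "integrable M (indicator A :: 'a \<Rightarrow> real)" "integrable M (indicator B :: 'a \<Rightarrow> real)"
      by (auto intro!: integrable_real_indicator simp: emeasure_eq_measure)
    have gint: "integrable M g" unfolding eqg
      using intA intB iA by (intro Bochner_Integration.integrable_add Bochner_Integration.integrable_diff
           integrable_mult_right) auto
    have "(\<integral>\<omega>. g \<omega> \<partial>M) = (\<integral>\<omega>. indicator A \<omega> * (1 / L \<omega>) - indicator B \<omega> * (1 / L \<omega>)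
              - (1/c) * indicator A \<omega> + (1/c) * indicator B \<omega> \<partial>M)"
      by (rule Bochner_Integration.integral_cong) (auto simp: g_def algebra_simps)
    also have "\<dots> = (\<integral>\<omega>. indicator A \<omega> * (1 / L \<omega>) \<partial>M) - (\<integral>\<omega>. indicator B \<omega> * (1 / L \<omega>) \<partial>M)
                - (1/c) * prob A + (1/c) * prob B"
    proof -
      have i3: "integrable M (\<lambda>\<omega>. (1/c) * indicator A \<omega> :: real)" "integrable M (\<lambda>\<omega>. (1/c) * indicator B \<omega> :: real)"
        using iA by auto
      have i12: "integrable M (\<lambda>\<omega>. indicator A \<omega> * (1 / L \<omega>) - indicator B \<omega> * (1 / L \<omega>))"
        using intA intB by auto
      have i123: "integrable M (\<lambda>\<omega>. indicator A \<omega> * (1 / L \<omega>) - indicator B \<omega> * (1 / L \<omega>) - (1/c) * indicator A \<omega>)"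
        using i12 i3 by auto
      show ?thesis
        apply (subst Bochner_Integration.integral_add[OF i123 i3(2)])
        apply (subst Bochner_Integration.integral_diff[OF i12 i3(1)])
        apply (subst Bochner_Integration.integral_diff[OF intA intB])
        apply (simp only: Bochner_Integration.integral_mult_right_zero)
        apply (simp add: Int_absorb2 sets.sets_into_space)
        done
    qed
    finally have gI: "(\<integral>\<omega>. g \<omega> \<partial>M) = (\<integral>\<omega>. indicator A \<omega> * (1 / L \<omega>) \<partial>M) - (\<integral>\<omega>. indicator B \<omega> * (1 / L \<omega>) \<partial>M)"
      using eq by simp
    have ge: "0 \<le> (\<integral>\<omega>. g \<omega> \<partial>M)" by (rule integral_nonneg_AE[OF gnn])
    have strict: "AE \<omega> in M. (\<omega> \<in> A \<longleftrightarrow> \<omega> \<in> B)"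
      if eq2: "(\<integral>\<omega>. indicator B \<omega> * (1 / L \<omega>) \<partial>M) = (\<integral>\<omega>. indicator A \<omega> * (1 / L \<omega>) \<partial>M)"
    proof -
      have "(\<integral>\<omega>. g \<omega> \<partial>M) = 0" using gI eq2 by simp
      hence "AE \<omega> in M. g \<omega> = 0" using integral_nonneg_eq_0_iff_AE[OF gint gnn] by simp
      moreover have "AE \<omega> in M. L \<omega> \<noteq> c"
        using L_atom[of c] by (subst AE_iff_measurable[OF _ refl]) (auto simp: emeasure_eq_measure)
      ultimately show ?thesis using Lpos
        by eventually_elim (auto simp: g_def indicator_def split: if_splits)
    qed
    show ?thesis using ge gI strict by simp
  qed
  thus "(\<integral>\<omega>. indicator B \<omega> * (1 / L \<omega>) \<partial>M) \<le> (\<integral>\<omega>. indicator A \<omega> * (1 / L \<omega>) \<partial>M)"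
    and "(\<integral>\<omega>. indicator B \<omega> * (1 / L \<omega>) \<partial>M) = (\<integral>\<omega>. indicator A \<omega> * (1 / L \<omega>) \<partial>M)
          \<Longrightarrow> AE \<omega> in M. (\<omega> \<in> A \<longleftrightarrow> \<omega> \<in> B)" by auto
qed

end



definition Qt :: "(real \<Rightarrow> real) \<Rightarrow> real \<Rightarrow> real" where
  "Qt G u = (if 0 < u \<and> u < 1 then max 0 (quantile G u) else 0)"

lemma Qt_nonneg: "0 \<le> Qt G u" by (simp add: Qt_def)

lemma Qt_meas[measurable]:
  assumes "is_cdf G" shows "Qt G \<in> borel_measurable borel"
proof -
  have "mono_on {0<..<1} (quantile G)"
    using assms unfolding is_cdf_def by (intro quantile_mono) auto
  hence mono: "mono_on {0<..<1} (\<lambda>u. max 0 (quantile G u))"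
    unfolding mono_on_def by (metis max.mono order_refl)
  have "(\<lambda>u. max 0 (quantile G u)) \<in> borel_measurable (restrict_space borel {0<..<1})"
    by (rule borel_measurable_mono_on_fnc[OF mono])
  hence "(\<lambda>x. indicator {0<..<1} x *\<^sub>R max 0 (quantile G x)) \<in> borel_measurable borel"
    by (subst (asm) borel_measurable_restrict_space_iff) auto
  also have "(\<lambda>x. indicator {0<..<1} x *\<^sub>R max 0 (quantile G x)) = Qt G"
    by (auto simp: Qt_def fun_eq_iff indicator_def)
  finally show ?thesis .
qed

lemma is_cdf_bounds:
  assumes "is_cdf G" shows "0 \<le> G x" "G x \<le> 1"
proof -
  interpret real_distribution "interval_measure G" by (rule interval_measure_is_cdf(1)[OF assms])
  show "0 \<le> G x" "G x \<le> 1" using cdf_nonneg[of x] cdf_bounded_prob[of x]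
    by (simp_all add: interval_measure_is_cdf(2)[OF assms])
qed

lemma Qt_gt:
  assumes "is_cdf G" "0 < u" "u < 1" "0 \<le> t"
  shows "t < Qt G u \<longleftrightarrow> G t < u"
proof -
  have "quantile G u \<le> t \<longleftrightarrow> u \<le> G t"
    using assms unfolding is_cdf_def by (intro quantile_props) auto
  thus ?thesis using assms by (auto simp: Qt_def)
qed

lemma Qt_le:
  assumes "is_cdf G" "0 < u" "u < 1" "\<forall>x<0. G x = 0"
  shows "Qt G u \<le> t \<longleftrightarrow> u \<le> G t"
proof (cases "0 \<le> t")
  case True thus ?thesis using Qt_gt[OF assms(1-3) True] by linarith
next
  case False thus ?thesis using assms Qt_nonneg[of G u] by auto
qed

lemma Qt_eq_quantile:
  assumes "is_cdf G" "0 < u" "u < 1" "\<forall>x<0. G x = 0"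
  shows "Qt G u = quantile G u"
proof -
  have "quantile G u \<le> quantile G u \<longleftrightarrow> u \<le> G (quantile G u)"
    using assms unfolding is_cdf_def by (intro quantile_props) auto
  hence "u \<le> G (quantile G u)" by simp
  hence "0 \<le> quantile G u" using assms by (intro quantile_nonneg) auto
  thus ?thesis using assms by (simp add: Qt_def)
qed

lemma lborel_interval_AE:
  fixes a b :: real
  assumes "AE t in lborel. (t < a \<longleftrightarrow> t < b)"
  shows "a = b"
proof (rule ccontr)
  assume "a \<noteq> b"
  define x y where "x = min a b" and "y = max a b"
  have xy: "x < y" using \<open>a \<noteq> b\<close> by (auto simp: x_def y_def)
  have "AE t in lborel. t \<notin> {x<..<y}" using assms
    by eventually_elim (auto simp: x_def y_def min_def max_def split: if_splits)
  hence "{x<..<y} \<in> null_sets lborel" by (subst AE_iff_null_sets) auto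
  hence "emeasure lborel {x<..<y} = 0" by auto
  thus False using xy by simp
qed

lemma ae_eq_of_nn_integral_eq:
  fixes f g :: "'b \<Rightarrow> ennreal"
  assumes [measurable]: "f \<in> borel_measurable N" "g \<in> borel_measurable N"
    and le: "\<And>x. f x \<le> g x" and fin: "(\<integral>\<^sup>+x. g x \<partial>N) < \<infinity>"
    and eq: "(\<integral>\<^sup>+x. f x \<partial>N) = (\<integral>\<^sup>+x. g x \<partial>N)"
  shows "AE x in N. f x = g x"
proof -
  have "(\<integral>\<^sup>+x. g x \<partial>N) = (\<integral>\<^sup>+x. f x + (g x - f x) \<partial>N)"
    using le by (intro nn_integral_cong) (simp add: add_diff_inverse_ennreal)
  also have "\<dots> = (\<integral>\<^sup>+x. f x \<partial>N) + (\<integral>\<^sup>+x. (g x - f x) \<partial>N)"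
    by (rule nn_integral_add) auto
  finally have "(\<integral>\<^sup>+x. f x \<partial>N) + 0 = (\<integral>\<^sup>+x. f x \<partial>N) + (\<integral>\<^sup>+x. (g x - f x) \<partial>N)"
    using eq by simp
  hence "(\<integral>\<^sup>+x. (g x - f x) \<partial>N) = 0"
    using eq fin unfolding ennreal_add_left_cancel by auto
  hence "AE x in N. g x - f x = 0" by (subst (asm) nn_integral_0_iff_AE) auto
  thus ?thesis
  proof eventually_elim
    case (elim x)
    hence "g x \<le> f x" by (intro ennreal_minus_eq_0)
    thus ?case using le[of x] by (rule antisym[rotated])
  qed
qed




context rearr
begin

lemma cdf_Qt:
  assumes G: "is_cdf G" "\<forall>x<0. G x = 0"
  shows "cdf (distr M borel (\<lambda>\<omega>. Qt G (FL (L \<omega>)))) = G"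
proof
  fix t
  have [measurable]: "Qt G \<in> borel_measurable borel" using Qt_meas[OF G(1)] .
  have "cdf (distr M borel (\<lambda>\<omega>. Qt G (FL (L \<omega>)))) t = prob {\<omega>\<in>space M. Qt G (FL (L \<omega>)) \<le> t}"
    by (simp add: cdf_def measure_distr vimage_def Int_def conj_commute)
  also have "\<dots> = prob {\<omega>\<in>space M. FL (L \<omega>) \<le> G t}"
  proof (rule finite_measure_eq_AE)
    show "AE \<omega> in M. (\<omega> \<in> {\<omega>\<in>space M. Qt G (FL (L \<omega>)) \<le> t}) = (\<omega> \<in> {\<omega>\<in>space M. FL (L \<omega>) \<le> G t})"
      using AE_U by eventually_elim (auto simp: Qt_le[OF G(1) _ _ G(2)])
  qed measurable
  also have "\<dots> = G t" using U_le is_cdf_bounds[OF G(1)] by simp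
  finally show "cdf (distr M borel (\<lambda>\<omega>. Qt G (FL (L \<omega>)))) t = G t" .
qed

lemma layer_aux:
  fixes v w :: real assumes "0 \<le> v"
  shows "(\<integral>\<^sup>+t. ennreal (if 0 \<le> t \<and> t < v then w else 0) \<partial>lborel) = ennreal v * ennreal w"
proof -
  have "(\<lambda>t. ennreal (if 0 \<le> t \<and> t < v then w else 0)) = (\<lambda>t. ennreal w * indicator {0..<v} t)"
    by (auto simp: indicator_def fun_eq_iff)
  thus ?thesis using assms by (simp add: nn_integral_cmult_indicator mult.commute)
qed

definition phi :: "('a \<Rightarrow> real) \<Rightarrow> real \<Rightarrow> ennreal" where
  "phi V t = (\<integral>\<^sup>+\<omega>. ennreal (if 0 \<le> t \<and> t < V \<omega> then 1 / L \<omega> else 0) \<partial>M)"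

lemma PS: "pair_sigma_finite lborel M"
  by (intro pair_sigma_finite.intro sigma_finite_lborel prob_space_imp_sigma_finite prob_space_axioms)

lemma phi_meas[measurable]: assumes [measurable]: "V \<in> borel_measurable M" shows "phi V \<in> borel_measurable borel"
proof -
  interpret PS: pair_sigma_finite lborel M by (rule PS)
  have "(\<lambda>t. \<integral>\<^sup>+\<omega>. ennreal (if 0 \<le> t \<and> t < V \<omega> then 1 / L \<omega> else 0) \<partial>M) \<in> borel_measurable lborel"
    by measurable
  thus ?thesis unfolding phi_def by simp
qed

lemma layer:
  assumes [measurable]: "V \<in> borel_measurable M" and nn: "\<forall>\<omega>\<in>space M. 0 \<le> V \<omega>"
  shows "(\<integral>\<^sup>+\<omega>. ennreal (V \<omega>) * ennreal (1 / L \<omega>) \<partial>M) = (\<integral>\<^sup>+t. phi V t \<partial>lborel)"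
proof -
  interpret PS: pair_sigma_finite lborel M by (rule PS)
  have "(\<integral>\<^sup>+\<omega>. ennreal (V \<omega>) * ennreal (1 / L \<omega>) \<partial>M) =
        (\<integral>\<^sup>+\<omega>. (\<integral>\<^sup>+t. ennreal (if 0 \<le> t \<and> t < V \<omega> then 1 / L \<omega> else 0) \<partial>lborel) \<partial>M)"
    using nn by (intro nn_integral_cong) (simp add: layer_aux)
  also have "\<dots> = (\<integral>\<^sup>+t. (\<integral>\<^sup>+\<omega>. ennreal (if 0 \<le> t \<and> t < V \<omega> then 1 / L \<omega> else 0) \<partial>M) \<partial>lborel)"
    by (rule PS.Fubini'[where f="\<lambda>t \<omega>. ennreal (if 0 \<le> t \<and> t < V \<omega> then 1 / L \<omega> else 0)"]) measurable
  finally show ?thesis by (simp add: phi_def)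
qed

lemma ind_int: assumes [measurable]: "S \<in> sets M"
  shows "(\<integral>\<^sup>+\<omega>. ennreal (indicator S \<omega> * (1 / L \<omega>)) \<partial>M) = ennreal (\<integral>\<omega>. indicator S \<omega> * (1 / L \<omega>) \<partial>M)"
    and "0 \<le> (\<integral>\<omega>. indicator S \<omega> * (1 / L \<omega>) \<partial>M)"
proof -
  have i: "integrable M (\<lambda>\<omega>. indicator S \<omega> * (1 / L \<omega>))"
    using integrable_real_mult_indicator[OF _ Wint] by (simp add: mult.commute)
  have nn: "AE \<omega> in M. 0 \<le> indicator S \<omega> * (1 / L \<omega>)"
    using Lpos by eventually_elim auto
  show "(\<integral>\<^sup>+\<omega>. ennreal (indicator S \<omega> * (1 / L \<omega>)) \<partial>M) = ennreal (\<integral>\<omega>. indicator S \<omega> * (1 / L \<omega>) \<partial>M)"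
    by (rule nn_integral_eq_integral[OF i nn])
  show "0 \<le> (\<integral>\<omega>. indicator S \<omega> * (1 / L \<omega>) \<partial>M)" by (rule integral_nonneg_AE[OF nn])
qed

lemma phi_compare:
  assumes Y[measurable]: "Y \<in> borel_measurable M" and Ynn: "\<forall>\<omega>\<in>space M. 0 \<le> Y \<omega>"
    and t: "0 \<le> t"
  defines "G \<equiv> cdf (distr M borel Y)"
  shows "phi (\<lambda>\<omega>. Qt G (FL (L \<omega>))) t \<le> phi Y t"
    and "phi (\<lambda>\<omega>. Qt G (FL (L \<omega>))) t = phi Y t \<Longrightarrow> AE \<omega> in M. (t < Y \<omega> \<longleftrightarrow> t < Qt G (FL (L \<omega>)))"
proof -
  have Gc: "is_cdf G" unfolding G_def by (rule is_cdf_cdf) simp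
  note [measurable] = Qt_meas[OF Gc]
  define A where "A = {\<omega>\<in>space M. t < Y \<omega>}"
  define B where "B = {\<omega>\<in>space M. G t < FL (L \<omega>)}"
  have [measurable]: "A \<in> sets M" "B \<in> sets M" unfolding A_def B_def by measurable
  have GY: "G t = prob {\<omega>\<in>space M. Y \<omega> \<le> t}"
    unfolding G_def by (simp add: cdf_def measure_distr vimage_def Int_def conj_commute)
  have pA: "prob A = 1 - G t"
  proof -
    have "prob A = prob (space M - {\<omega>\<in>space M. Y \<omega> \<le> t})"
      unfolding A_def by (intro arg_cong[where f=prob]) auto
    also have "\<dots> = 1 - G t" using GY by (subst prob_compl) auto
    finally show ?thesis .
  qed
  have pB: "prob B = 1 - G t" unfolding B_def using U_gt is_cdf_bounds[OF Gc] by simp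
  have sep: "L \<omega>' < L \<omega>" if "\<omega> \<in> B" "\<omega>' \<in> space M - B" for \<omega> \<omega>'
  proof (rule ccontr)
    assume "\<not> L \<omega>' < L \<omega>"
    hence "FL (L \<omega>) \<le> FL (L \<omega>')" using FL_mono by simp
    thus False using that unfolding B_def by auto
  qed
  have phiY: "phi Y t = ennreal (\<integral>\<omega>. indicator A \<omega> * (1 / L \<omega>) \<partial>M)"
    unfolding phi_def ind_int(1)[symmetric, OF \<open>A \<in> sets M\<close>] using t
    by (intro nn_integral_cong) (auto simp: A_def indicator_def)
  have phiZ: "phi (\<lambda>\<omega>. Qt G (FL (L \<omega>))) t = ennreal (\<integral>\<omega>. indicator B \<omega> * (1 / L \<omega>) \<partial>M)"
    unfolding phi_def ind_int(1)[symmetric, OF \<open>B \<in> sets M\<close>]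
  proof (rule nn_integral_cong_AE)
    show "AE \<omega> in M. ennreal (if 0 \<le> t \<and> t < Qt G (FL (L \<omega>)) then 1 / L \<omega> else 0) =
        ennreal (indicator B \<omega> * (1 / L \<omega>))"
      using AE_U AE_space by eventually_elim (auto simp: B_def indicator_def Qt_gt[OF Gc _ _ t] t)
  qed
  note np = NP[OF \<open>A \<in> sets M\<close> \<open>B \<in> sets M\<close> _ sep]
  show "phi (\<lambda>\<omega>. Qt G (FL (L \<omega>))) t \<le> phi Y t"
    unfolding phiY phiZ using np(1) pA pB by (simp add: ennreal_leI)
  assume "phi (\<lambda>\<omega>. Qt G (FL (L \<omega>))) t = phi Y t"
  hence "(\<integral>\<omega>. indicator B \<omega> * (1 / L \<omega>) \<partial>M) = (\<integral>\<omega>. indicator A \<omega> * (1 / L \<omega>) \<partial>M)"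
    unfolding phiY phiZ using ind_int(2)[of A] ind_int(2)[of B] by simp
  hence "AE \<omega> in M. (\<omega> \<in> A \<longleftrightarrow> \<omega> \<in> B)" using np(2) pA pB by simp
  thus "AE \<omega> in M. (t < Y \<omega> \<longleftrightarrow> t < Qt G (FL (L \<omega>)))" using AE_U AE_space
    by eventually_elim (auto simp: A_def B_def Qt_gt[OF Gc _ _ t])
qed

lemma phi_neg: "t < 0 \<Longrightarrow> phi V t = 0" by (simp add: phi_def)

theorem rearrangement:
  assumes Y[measurable]: "Y \<in> borel_measurable M" and Ynn: "\<forall>\<omega>\<in>space M. 0 \<le> Y \<omega>"
  defines "G \<equiv> cdf (distr M borel Y)"
  shows "(\<integral>\<^sup>+\<omega>. ennreal (Qt G (FL (L \<omega>))) * ennreal (1 / L \<omega>) \<partial>M) \<le> (\<integral>\<^sup>+\<omega>. ennreal (Y \<omega>) * ennreal (1 / L \<omega>) \<partial>M)"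
    and "(\<integral>\<^sup>+\<omega>. ennreal (Y \<omega>) * ennreal (1 / L \<omega>) \<partial>M) < \<infinity> \<Longrightarrow>
         (\<integral>\<^sup>+\<omega>. ennreal (Qt G (FL (L \<omega>))) * ennreal (1 / L \<omega>) \<partial>M) = (\<integral>\<^sup>+\<omega>. ennreal (Y \<omega>) * ennreal (1 / L \<omega>) \<partial>M)
         \<Longrightarrow> AE \<omega> in M. Y \<omega> = Qt G (FL (L \<omega>))"
proof -
  have Gc: "is_cdf G" unfolding G_def by (rule is_cdf_cdf) simp
  note [measurable] = Qt_meas[OF Gc]
  let ?Z = "\<lambda>\<omega>. Qt G (FL (L \<omega>))"
  have Zm[measurable]: "?Z \<in> borel_measurable M" by measurable
  have le: "phi ?Z t \<le> phi Y t" for t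
    using phi_compare(1)[OF Y Ynn, of t] phi_neg[of t] unfolding G_def by (cases "0 \<le> t") auto
  have LZ: "(\<integral>\<^sup>+\<omega>. ennreal (?Z \<omega>) * ennreal (1 / L \<omega>) \<partial>M) = (\<integral>\<^sup>+t. phi ?Z t \<partial>lborel)"
    by (rule layer[OF Zm]) (simp add: Qt_nonneg)
  have LY: "(\<integral>\<^sup>+\<omega>. ennreal (Y \<omega>) * ennreal (1 / L \<omega>) \<partial>M) = (\<integral>\<^sup>+t. phi Y t \<partial>lborel)"
    by (rule layer[OF Y Ynn])
  show "(\<integral>\<^sup>+\<omega>. ennreal (?Z \<omega>) * ennreal (1 / L \<omega>) \<partial>M) \<le> (\<integral>\<^sup>+\<omega>. ennreal (Y \<omega>) * ennreal (1 / L \<omega>) \<partial>M)"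
    unfolding LZ LY by (intro nn_integral_mono le)
  assume fin: "(\<integral>\<^sup>+\<omega>. ennreal (Y \<omega>) * ennreal (1 / L \<omega>) \<partial>M) < \<infinity>"
    and eq: "(\<integral>\<^sup>+\<omega>. ennreal (?Z \<omega>) * ennreal (1 / L \<omega>) \<partial>M) = (\<integral>\<^sup>+\<omega>. ennreal (Y \<omega>) * ennreal (1 / L \<omega>) \<partial>M)"
  have "AE t in lborel. phi ?Z t = phi Y t"
    using fin eq unfolding LZ LY by (intro ae_eq_of_nn_integral_eq le) auto
  hence AEt: "AE t in lborel. AE \<omega> in M. (t < Y \<omega> \<longleftrightarrow> t < ?Z \<omega>)"
  proof eventually_elim
    case (elim t)
    show ?case
    proof (cases "0 \<le> t")
      case True thus ?thesis using phi_compare(2)[OF Y Ynn True] elim unfolding G_def by simp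
    next
      case False
      have "t < ?Z \<omega>" for \<omega> using False Qt_nonneg[of G "FL (L \<omega>)"] by linarith
      moreover have "t < Y \<omega>" if "\<omega> \<in> space M" for \<omega> using False Ynn that by force
      ultimately show ?thesis by (intro AE_I2) auto
    qed
  qed
  interpret PS: pair_sigma_finite lborel M by (rule PS)
  have "AE \<omega> in M. AE t in lborel. (t < Y \<omega> \<longleftrightarrow> t < ?Z \<omega>)"
    using AEt by (subst (asm) PS.AE_commute) measurable
  thus "AE \<omega> in M. Y \<omega> = ?Z \<omega>"
    by eventually_elim (rule lborel_interval_AE)
qed

end



lemma doob_dynkin:
  fixes f :: "'a \<Rightarrow> real" and S :: "'a \<Rightarrow> real"
  assumes sets: "sets M = sets (vimage_algebra (space M) S borel)" and f[measurable]: "f \<in> borel_measurable M"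
  shows "\<exists>g\<in>borel_measurable borel. \<forall>\<omega>\<in>space M. f \<omega> = g (S \<omega>)"
proof -
  have "\<forall>q::rat. \<exists>B. B \<in> sets borel \<and> {\<omega>\<in>space M. f \<omega> \<le> real_of_rat q} = S -` B \<inter> space M"
  proof
    fix q :: rat
    have "{\<omega>\<in>space M. f \<omega> \<le> real_of_rat q} \<in> sets M" by measurable
    hence "{\<omega>\<in>space M. f \<omega> \<le> real_of_rat q} \<in> sets (vimage_algebra (space M) S borel)" using sets by simp
    thus "\<exists>B. B \<in> sets borel \<and> {\<omega>\<in>space M. f \<omega> \<le> real_of_rat q} = S -` B \<inter> space M"
      by (subst (asm) sets_vimage_algebra2) auto
  qed
  then obtain B where B: "\<And>q. B q \<in> sets borel" "\<And>q. {\<omega>\<in>space M. f \<omega> \<le> real_of_rat q} = S -` B q \<inter> space M"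
    by metis
  define ge where "ge x = (INF q\<in>(UNIV::rat set). if x \<in> B q then ereal (real_of_rat q) else \<infinity>)" for x
  have mq: "(\<lambda>x. if x \<in> B q then ereal (real_of_rat q) else \<infinity>) \<in> borel_measurable borel" for q
  proof -
    have [measurable]: "B q \<in> sets borel" by (rule B)
    show ?thesis by measurable
  qed
  have gem: "ge \<in> borel_measurable borel" unfolding ge_def
    by (rule borel_measurable_INF) (auto intro: mq)
  define g where "g x = real_of_ereal (ge x)" for x
  have gm: "g \<in> borel_measurable borel" unfolding g_def using gem by measurable
  have "f \<omega> = g (S \<omega>)" if \<omega>: "\<omega> \<in> space M" for \<omega>
  proof -
    have mem: "S \<omega> \<in> B q \<longleftrightarrow> f \<omega> \<le> real_of_rat q" for q
      using B(2)[of q] \<omega> by blast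
    have "ge (S \<omega>) = ereal (f \<omega>)"
    proof (rule antisym)
      show "ereal (f \<omega>) \<le> ge (S \<omega>)" unfolding ge_def
        by (rule INF_greatest) (auto simp: mem)
      show "ge (S \<omega>) \<le> ereal (f \<omega>)"
      proof (rule dense_ge)
        fix x :: ereal assume x: "ereal (f \<omega>) < x"
        show "ge (S \<omega>) \<le> x"
        proof (cases x)
          case (real r)
          hence "f \<omega> < r" using x by simp
          then obtain q where q: "q \<in> \<rat>" "f \<omega> < q" "q < r" using Rats_dense_in_real by blast
          then obtain q' where q': "q = real_of_rat q'" by (auto simp: Rats_def)
          have "ge (S \<omega>) \<le> (if S \<omega> \<in> B q' then ereal (real_of_rat q') else \<infinity>)"
            unfolding ge_def by (rule INF_lower) simp
          also have "\<dots> = ereal q" using q q' mem[of q'] by simp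
          also have "\<dots> \<le> x" using q real by simp
          finally show ?thesis .
        qed (use x in auto)
      qed
    qed
    thus ?thesis by (simp add: g_def)
  qed
  thus ?thesis using gm by blast
qed

lemma AE_transfer:
  assumes "sets M = sets N" "null_sets M = null_sets N" "AE x in M. P x"
  shows "AE x in N. P x"
proof -
  have sp: "space M = space N" using assms(1) by (rule sets_eq_imp_space_eq)
  from assms(3) obtain A where "A \<in> null_sets M" "{x\<in>space M. \<not> P x} \<subseteq> A"
    by (auto simp: eventually_ae_filter)
  thus ?thesis using assms(2) sp by (auto simp: eventually_ae_filter)
qed




context unif_setup
begin

lemma unif_dens: "real_distribution (density lborel (indicator {0<..<1}))"
proof -
  have "emeasure (density lborel (indicator {0<..<1::real})) UNIV = (\<integral>\<^sup>+t. indicator {0<..<1::real} t * indicator UNIV t \<partial>lborel)"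
    by (rule emeasure_density) auto
  also have "\<dots> = emeasure lborel {0<..<1::real}"
    by (simp add: nn_integral_indicator)
  finally have "emeasure (density lborel (indicator {0<..<1::real})) UNIV = 1" by simp
  hence "prob_space (density lborel (indicator {0<..<1::real}))"
    by (intro prob_spaceI) simp
  thus ?thesis by (simp add: real_distribution_def real_distribution_axioms_def)
qed

lemma distr_U: "distr M borel (\<lambda>\<omega>. FL (L \<omega>)) = density lborel (indicator {0<..<1})"
proof (rule cdf_unique)
  show "real_distribution (distr M borel (\<lambda>\<omega>. FL (L \<omega>)))" by simp
  show "real_distribution (density lborel (indicator {0<..<1}))" by (rule unif_dens)
  show "cdf (distr M borel (\<lambda>\<omega>. FL (L \<omega>))) = cdf (density lborel (indicator {0<..<1}))"
  proof
    fix x :: real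
    have c1: "cdf (distr M borel (\<lambda>\<omega>. FL (L \<omega>))) x = prob {\<omega>\<in>space M. FL (L \<omega>) \<le> x}"
      by (simp add: cdf_def measure_distr vimage_def Int_def conj_commute)
    have c2: "cdf (density lborel (indicator {0<..<1})) x = measure lborel ({0<..<1} \<inter> {..x})"
    proof -
      have "emeasure (density lborel (indicator {0<..<1})) {..x} = (\<integral>\<^sup>+t. indicator {0<..<1} t * indicator {..x} t \<partial>lborel)"
        by (rule emeasure_density) auto
      also have "\<dots> = (\<integral>\<^sup>+t. indicator ({0<..<1} \<inter> {..x}) t \<partial>lborel)"
        by (intro nn_integral_cong) (simp split: split_indicator)
      also have "\<dots> = emeasure lborel ({0<..<1} \<inter> {..x})"
        by (rule nn_integral_indicator) simp
      finally show ?thesis by (simp add: cdf_def measure_def)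
    qed
    show "cdf (distr M borel (\<lambda>\<omega>. FL (L \<omega>))) x = cdf (density lborel (indicator {0<..<1})) x"
      unfolding c1 c2
    proof (cases "x < 0")
      case True
      have "prob {\<omega>\<in>space M. FL (L \<omega>) \<le> x} \<le> prob {\<omega>\<in>space M. FL (L \<omega>) \<le> 0}"
        using True by (intro finite_measure_mono) auto
      hence "prob {\<omega>\<in>space M. FL (L \<omega>) \<le> x} = 0" using U_le_0 measure_nonneg[of M] by (simp add: antisym)
      moreover have "{0<..<1} \<inter> {..x} = {}" using True by auto
      ultimately show "prob {\<omega>\<in>space M. FL (L \<omega>) \<le> x} = measure lborel ({0<..<1} \<inter> {..x})" by simp
    next
      case False
      show "prob {\<omega>\<in>space M. FL (L \<omega>) \<le> x} = measure lborel ({0<..<1} \<inter> {..x})"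
      proof (cases "x < 1")
        case True
        have "{0<..<1} \<inter> {..x} = {0<..x}" using True False by auto
        thus ?thesis using U_le[of x] True False by simp
      next
        case False2: False
        have "FL y \<le> x" for y using FL_bounds(2)[of y] False2 by linarith
        hence "{\<omega>\<in>space M. FL (L \<omega>) \<le> x} = space M" by auto
        moreover have "{0<..<1} \<inter> {..x} = {0<..<1}" using False2 by auto
        ultimately show ?thesis by (simp add: prob_space)
      qed
    qed
  qed
qed

lemma sq_int:
  assumes G: "is_cdf G" "\<forall>x<0. G x = 0"
    and C1: "set_integrable lborel {0<..<1} (\<lambda>u. (quantile G u)\<^sup>2)"
  shows "(\<integral>\<^sup>+\<omega>. ennreal ((Qt G (FL (L \<omega>)))\<^sup>2) \<partial>M) < \<infinity>"
proof -
  note [measurable] = Qt_meas[OF G(1)]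
  have "(\<integral>\<^sup>+\<omega>. ennreal ((Qt G (FL (L \<omega>)))\<^sup>2) \<partial>M) = (\<integral>\<^sup>+u. ennreal ((Qt G u)\<^sup>2) \<partial>distr M borel (\<lambda>\<omega>. FL (L \<omega>)))"
    by (subst nn_integral_distr) auto
  also have "\<dots> = (\<integral>\<^sup>+u. indicator {0<..<1} u * ennreal ((Qt G u)\<^sup>2) \<partial>lborel)"
    unfolding distr_U by (subst nn_integral_density) auto
  also have "\<dots> = (\<integral>\<^sup>+u. ennreal (norm (indicator {0<..<1} u *\<^sub>R (quantile G u)\<^sup>2)) \<partial>lborel)"
    by (intro nn_integral_cong) (auto simp: indicator_def Qt_eq_quantile[OF G(1) _ _ G(2)])
  also have "\<dots> < \<infinity>" using C1 unfolding set_integrable_def integrable_iff_bounded by simp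
  finally show ?thesis .
qed

end

context rearr
begin

lemma Xs_finite:
  assumes G: "is_cdf G" "\<forall>x<0. G x = 0"
    and C1: "set_integrable lborel {0<..<1} (\<lambda>u. (quantile G u)\<^sup>2)"
    and W2: "integrable M (\<lambda>\<omega>. (1 / L \<omega>)\<^sup>2)"
  shows "(\<integral>\<^sup>+\<omega>. ennreal (Qt G (FL (L \<omega>))) * ennreal (1 / L \<omega>) \<partial>M) < \<infinity>"
proof -
  note [measurable] = Qt_meas[OF G(1)]
  have "(\<integral>\<^sup>+\<omega>. ennreal (Qt G (FL (L \<omega>))) * ennreal (1 / L \<omega>) \<partial>M)
      \<le> (\<integral>\<^sup>+\<omega>. ennreal ((Qt G (FL (L \<omega>)))\<^sup>2) + ennreal ((1 / L \<omega>)\<^sup>2) \<partial>M)"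
  proof (intro nn_integral_mono)
    fix \<omega>
    define a where "a = Qt G (FL (L \<omega>))"
    define b where "b = 1 / L \<omega>"
    have a: "0 \<le> a" by (simp add: a_def Qt_nonneg)
    show "ennreal (Qt G (FL (L \<omega>))) * ennreal (1 / L \<omega>) \<le> ennreal ((Qt G (FL (L \<omega>)))\<^sup>2) + ennreal ((1 / L \<omega>)\<^sup>2)"
      unfolding a_def[symmetric] b_def[symmetric]
    proof (cases "0 \<le> b")
      case True
      have "0 \<le> (a - b)\<^sup>2" by simp
      hence "2 * (a * b) \<le> a\<^sup>2 + b\<^sup>2" by (simp add: power2_diff)
      moreover have "0 \<le> a * b" using a True by simp
      ultimately have "a * b \<le> a\<^sup>2 + b\<^sup>2" by linarith
      have "ennreal a * ennreal b = ennreal (a * b)" using a True by (rule ennreal_mult[symmetric])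
      also have "\<dots> \<le> ennreal (a\<^sup>2 + b\<^sup>2)" by (rule ennreal_leI) fact
      also have "\<dots> = ennreal (a\<^sup>2) + ennreal (b\<^sup>2)" by (rule ennreal_plus) simp_all
      finally show "ennreal a * ennreal b \<le> ennreal (a\<^sup>2) + ennreal (b\<^sup>2)" .
    next
      case False
      hence "ennreal b = 0" by (intro ennreal_neg) simp
      thus "ennreal a * ennreal b \<le> ennreal (a\<^sup>2) + ennreal (b\<^sup>2)" by simp
    qed
  qed
  also have "\<dots> = (\<integral>\<^sup>+\<omega>. ennreal ((Qt G (FL (L \<omega>)))\<^sup>2) \<partial>M) + (\<integral>\<^sup>+\<omega>. ennreal ((1 / L \<omega>)\<^sup>2) \<partial>M)"
    by (rule nn_integral_add) auto
  also have "\<dots> < \<infinity>"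
  proof -
    have "(\<integral>\<^sup>+\<omega>. ennreal ((1 / L \<omega>)\<^sup>2) \<partial>M) < \<infinity>"
      using W2 unfolding integrable_iff_bounded by simp
    thus ?thesis using sq_int[OF G C1] by (simp add: ennreal_add_less_top)
  qed
  finally show ?thesis .
qed

end

lemma meas_transfer: "sets P = sets Q \<Longrightarrow> f \<in> measurable Q N \<Longrightarrow> f \<in> measurable P N"
  using measurable_cong_sets[of P Q N N] by simp

lemma payoff_props:
  assumes "X \<in> payoffs Q S" and "\<forall>\<omega>\<in>space Q. 0 \<le> S \<omega>"
  shows "X \<in> borel_measurable Q" "\<forall>\<omega>\<in>space Q. 0 \<le> X \<omega>" "integrable Q X"
  using assms by (auto simp: payoffs_def)

theorem mainTheorem3:
  fixes T r :: real and S :: "'a \<Rightarrow> real" and Q :: "'a measure"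
    and PP :: "'a measure set" and FF :: "(real \<Rightarrow> real) set"
    and F0 :: "real \<Rightarrow> real" and Ps :: "'a measure"
  assumes "T > 0"
    and S_nonneg: "\<forall>\<omega>\<in>space Q. 0 \<le> S \<omega>"
    and sigma_S: "sets Q = sets (vimage_algebra (space Q) S borel)"
    and Q: "prob_space Q"
    and PP: "\<forall>P\<in>PP. prob_space P \<and> sets P = sets Q \<and> null_sets P = null_sets Q"
    and FF_meas: "FF \<subseteq> borel_measurable borel"
    and cdf_F0: "is_cdf F0"
    and C1: "set_integrable lborel {0<..<1} (\<lambda>u. (quantile F0 u)\<^sup>2)"
        "\<forall>x<0. F0 x = 0"
    and C2: "composition_consistent FF" "cost_consistent r T Q S PP FF"
    and C3: "least_favorable Q PP FF Ps"
    and C4: "continuous_on UNIV (cdf_of Ps (lr Q Ps))"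
        "integrable Ps (\<lambda>\<omega>. (1 / lr Q Ps \<omega>)\<^sup>2)"
    and inF: "quantile F0 \<circ> cdf_of Ps (lr Q Ps) \<in> FF"
  shows "(\<exists>X. robust_solution r T Q S PP FF F0 X \<and>
            (AE \<omega> in Ps. X \<omega> = quantile F0 (cdf_of Ps (lr Q Ps) (lr Q Ps \<omega>)))) \<and>
         (\<forall>X. robust_solution r T Q S PP FF F0 X \<longrightarrow>
            (AE \<omega> in Ps. X \<omega> = quantile F0 (cdf_of Ps (lr Q Ps) (lr Q Ps \<omega>))))"
proof -
  have Ps_in: "Ps \<in> PP" using C3 unfolding least_favorable_def by simp
  have Ps: "prob_space Ps" "sets Ps = sets Q" "null_sets Ps = null_sets Q" using PP Ps_in by auto
  have spPs: "space Ps = space Q" using Ps(2) by (rule sets_eq_imp_space_eq)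
  interpret Qp: prob_space Q by (rule Q)
  define lL where "lL = lr Q Ps"
  have lL_def': "lL = (\<lambda>\<omega>. enn2real (RN_deriv Q Ps \<omega>))" by (simp add: lL_def lr_def)
  have ac: "absolutely_continuous Q Ps" using Ps(3) by (simp add: absolutely_continuous_def)
  have dens: "density Q (RN_deriv Q Ps) = Ps" by (rule Qp.density_RN_deriv[OF ac Ps(2)])
  have fin: "AE \<omega> in Q. RN_deriv Q Ps \<omega> \<noteq> \<infinity>"
    by (rule Qp.RN_deriv_finite[OF prob_space_imp_sigma_finite[OF Ps(1)] ac Ps(2)])
  have lLmQ[measurable]: "lL \<in> borel_measurable Q" unfolding lL_def' by measurable
  have lLmP[measurable]: "lL \<in> borel_measurable Ps" by (rule meas_transfer[OF Ps(2) lLmQ])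
  have lLnn: "0 \<le> lL \<omega>" for \<omega> by (simp add: lL_def')
  have RNeq: "AE \<omega> in Q. RN_deriv Q Ps \<omega> = ennreal (lL \<omega>)"
    using fin by eventually_elim (simp add: lL_def' less_top[symmetric])
  have denslL: "Ps = density Q (\<lambda>\<omega>. ennreal (lL \<omega>))"
    using dens density_cong[OF borel_measurable_RN_deriv _ RNeq] by simp
  define N where "N = {\<omega>\<in>space Q. lL \<omega> = 0}"
  have NQ: "N \<in> sets Q" unfolding N_def by measurable
  have "emeasure Ps N = (\<integral>\<^sup>+\<omega>. ennreal (lL \<omega>) * indicator N \<omega> \<partial>Q)"
    using NQ by (subst denslL) (rule emeasure_density; measurable)
  also have "\<dots> = (\<integral>\<^sup>+\<omega>. 0 \<partial>Q)"
    by (intro nn_integral_cong) (auto simp: N_def indicator_def)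
  finally have NPs: "N \<in> null_sets Ps" using NQ Ps(2) by auto
  hence NnQ: "N \<in> null_sets Q" using Ps(3) by simp
  have posQ: "AE \<omega> in Q. 0 < lL \<omega>"
    using AE_not_in[OF NnQ] AE_space[of Q] by eventually_elim (use lLnn in \<open>auto simp: N_def less_le\<close>)
  have posP: "AE \<omega> in Ps. 0 < lL \<omega>"
    by (rule AE_transfer[OF _ _ posQ]) (use Ps in auto)
  have W2: "integrable Ps (\<lambda>\<omega>. (1 / lL \<omega>)\<^sup>2)" using C4(2) by (simp add: lL_def)
  have Wint: "integrable Ps (\<lambda>\<omega>. 1 / lL \<omega>)"
  proof (rule Bochner_Integration.integrable_bound)
    show "integrable Ps (\<lambda>\<omega>. 1 + (1 / lL \<omega>)\<^sup>2)"
      using W2 finite_measure.integrable_const[OF prob_space.axioms(1)[OF Ps(1)]] by (intro Bochner_Integration.integrable_add) auto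
    show "(\<lambda>\<omega>. 1 / lL \<omega>) \<in> borel_measurable Ps" by measurable
    show "AE \<omega> in Ps. norm (1 / lL \<omega>) \<le> norm (1 + (1 / lL \<omega>)\<^sup>2)"
    proof (rule AE_I2)
      fix \<omega>
      have "\<bar>1 / lL \<omega>\<bar> \<le> 1 + (1 / lL \<omega>)\<^sup>2"
      proof -
        define v where "v = \<bar>1 / lL \<omega>\<bar>"
        have v0: "0 \<le> v" by (simp add: v_def)
        have "0 \<le> (v - 1)\<^sup>2" by simp
        hence "2 * v \<le> v\<^sup>2 + 1" by (simp add: power2_diff)
        hence "v \<le> 1 + v\<^sup>2" using v0 by linarith
        moreover have "v\<^sup>2 = (1 / lL \<omega>)\<^sup>2" unfolding v_def by (rule power2_abs)
        ultimately show ?thesis by (simp add: v_def)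
      qed
      thus "norm (1 / lL \<omega>) \<le> norm (1 + (1 / lL \<omega>)\<^sup>2)" by simp
    qed
  qed
  have FLeq: "cdf_of Ps (lr Q Ps) = cdf (distr Ps borel lL)" by (simp add: cdf_of_def lL_def)
  have "rearr Ps lL"
    unfolding rearr_def rearr_axioms_def unif_setup_def unif_setup_axioms_def
    using Ps(1) lLmP C4(1) FLeq posP Wint by simp
  then interpret R: rearr Ps lL .
  have K: "(\<integral>\<^sup>+\<omega>. ennreal (X \<omega>) \<partial>Q) = (\<integral>\<^sup>+\<omega>. ennreal (X \<omega>) * ennreal (1 / lL \<omega>) \<partial>Ps)"
    if [measurable]: "X \<in> borel_measurable Q" for X :: "'a \<Rightarrow> real"
  proof -
    have "(\<integral>\<^sup>+\<omega>. ennreal (X \<omega>) * ennreal (1 / lL \<omega>) \<partial>Ps)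
        = (\<integral>\<^sup>+\<omega>. ennreal (X \<omega>) * ennreal (1 / lL \<omega>) \<partial>density Q (\<lambda>\<omega>. ennreal (lL \<omega>)))"
      using denslL by simp
    also have "\<dots> = (\<integral>\<^sup>+\<omega>. ennreal (lL \<omega>) * (ennreal (X \<omega>) * ennreal (1 / lL \<omega>)) \<partial>Q)"
      by (rule nn_integral_density) measurable
    also have "\<dots> = (\<integral>\<^sup>+\<omega>. ennreal (X \<omega>) \<partial>Q)"
    proof (rule nn_integral_cong_AE)
      show "AE \<omega> in Q. ennreal (lL \<omega>) * (ennreal (X \<omega>) * ennreal (1 / lL \<omega>)) = ennreal (X \<omega>)"
        using posQ
      proof eventually_elim
        case (elim \<omega>)
        have "ennreal (lL \<omega> * (1 / lL \<omega>)) = ennreal (lL \<omega>) * ennreal (1 / lL \<omega>)"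
          using elim by (intro ennreal_mult) auto
        hence "ennreal (lL \<omega>) * ennreal (1 / lL \<omega>) = ennreal (lL \<omega> * (1 / lL \<omega>))" by simp
        also have "\<dots> = 1" using elim by simp
        finally show ?case by (simp add: mult.left_commute)
      qed
    qed
    finally show ?thesis by simp
  qed
  obtain g0 where g0: "g0 \<in> borel_measurable borel" "\<forall>\<omega>\<in>space Q. lL \<omega> = g0 (S \<omega>)"
    using doob_dynkin[OF sigma_S lLmQ] by blast
  note [measurable] = R.FL_meas
  define Zf where "Zf G \<omega> = Qt G (R.FL (lL \<omega>))" for G \<omega>
  have ZfmQ: "Zf G \<in> borel_measurable Q" if "is_cdf G" for G
  proof -
    note [measurable] = Qt_meas[OF that]
    show ?thesis unfolding Zf_def[abs_def] by measurable
  qed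
  have ZfmP: "Zf G \<in> borel_measurable Ps" if "is_cdf G" for G
    by (rule meas_transfer[OF Ps(2) ZfmQ[OF that]])
  have Zpay: "Zf G \<in> payoffs Q S" if "is_cdf G" "integrable Q (Zf G)" for G
  proof -
    note [measurable] = Qt_meas[OF that(1)] g0(1)
    have "(\<lambda>x. Qt G (R.FL (g0 x))) \<in> borel_measurable borel" by measurable
    moreover have "\<forall>x\<ge>0. 0 \<le> Qt G (R.FL (g0 x))" by (simp add: Qt_nonneg)
    moreover have "\<forall>\<omega>\<in>space Q. Zf G \<omega> = Qt G (R.FL (g0 (S \<omega>)))" using g0(2) by (simp add: Zf_def[abs_def])
    ultimately show ?thesis using that(2) unfolding payoffs_def by blast
  qed
  have cdfZ: "cdf_of Ps (Zf G) = G" if "is_cdf G" "\<forall>x<0. G x = 0" for G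
    using R.cdf_Qt[OF that] by (simp add: cdf_of_def Zf_def[abs_def])
  have IntK: "ennreal (\<integral>\<omega>. X \<omega> \<partial>Q) = (\<integral>\<^sup>+\<omega>. ennreal (X \<omega>) * ennreal (1 / lL \<omega>) \<partial>Ps)"
    if "integrable Q X" "\<forall>\<omega>\<in>space Q. 0 \<le> X \<omega>" for X :: "'a \<Rightarrow> real"
  proof -
    have "ennreal (\<integral>\<omega>. X \<omega> \<partial>Q) = (\<integral>\<^sup>+\<omega>. ennreal (X \<omega>) \<partial>Q)"
      using that by (intro nn_integral_eq_integral[symmetric]) (auto intro!: AE_I2)
    also have "\<dots> = (\<integral>\<^sup>+\<omega>. ennreal (X \<omega>) * ennreal (1 / lL \<omega>) \<partial>Ps)"
      using that(1) by (intro K) auto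
    finally show ?thesis .
  qed
  have int_nonneg: "0 \<le> (\<integral>\<omega>. X \<omega> \<partial>Q)" if "\<forall>\<omega>\<in>space Q. 0 \<le> X \<omega>" for X :: "'a \<Rightarrow> real"
    using that by (intro integral_nonneg_AE AE_I2) auto
  have le_of_K: "(\<integral>\<omega>. X \<omega> \<partial>Q) \<le> (\<integral>\<omega>. Y \<omega> \<partial>Q)"
    if "integrable Q X" "\<forall>\<omega>\<in>space Q. 0 \<le> X \<omega>" "integrable Q Y" "\<forall>\<omega>\<in>space Q. 0 \<le> Y \<omega>"
       "(\<integral>\<^sup>+\<omega>. ennreal (X \<omega>) * ennreal (1 / lL \<omega>) \<partial>Ps) \<le> (\<integral>\<^sup>+\<omega>. ennreal (Y \<omega>) * ennreal (1 / lL \<omega>) \<partial>Ps)"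
    for X Y :: "'a \<Rightarrow> real"
  proof -
    have "ennreal (\<integral>\<omega>. X \<omega> \<partial>Q) \<le> ennreal (\<integral>\<omega>. Y \<omega> \<partial>Q)"
      using IntK[OF that(1,2)] IntK[OF that(3,4)] that(5) by simp
    thus ?thesis using int_nonneg[OF that(4)] by (simp add: ennreal_le_iff)
  qed
  have price_mono: "price r T Q X \<le> price r T Q Y" if "(\<integral>\<omega>. X \<omega> \<partial>Q) \<le> (\<integral>\<omega>. Y \<omega> \<partial>Q)" for X Y :: "'a \<Rightarrow> real"
    using that unfolding price_def by (intro mult_left_mono) auto
  have Zint: "integrable Q (Zf G)" if "is_cdf G"
      "(\<integral>\<^sup>+\<omega>. ennreal (Zf G \<omega>) * ennreal (1 / lL \<omega>) \<partial>Ps) < \<infinity>" for G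
  proof (rule integrableI_nonneg)
    show "Zf G \<in> borel_measurable Q" by (rule ZfmQ[OF that(1)])
    show "AE \<omega> in Q. 0 \<le> Zf G \<omega>" by (simp add: Zf_def[abs_def] Qt_nonneg)
    show "(\<integral>\<^sup>+\<omega>. ennreal (Zf G \<omega>) \<partial>Q) < \<infinity>" using K[OF ZfmQ[OF that(1)]] that(2) by simp
  qed
  have CE: "cost_efficient r T Q S Ps (Zf G)"
    if G: "is_cdf G" "\<forall>x<0. G x = 0" and iZ: "integrable Q (Zf G)" for G
    unfolding cost_efficient_def
  proof (intro conjI ballI impI)
    show "Zf G \<in> payoffs Q S" by (rule Zpay[OF G(1) iZ])
    fix Y assume Y: "Y \<in> payoffs Q S" and eqc: "cdf_of Ps Y = cdf_of Ps (Zf G)"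
    note Yp = payoff_props[OF Y S_nonneg]
    have YmP: "Y \<in> borel_measurable Ps" by (rule meas_transfer[OF Ps(2) Yp(1)])
    have cY: "cdf (distr Ps borel Y) = G" using eqc cdfZ[OF G] by (simp add: cdf_of_def)
    have "(\<integral>\<^sup>+\<omega>. ennreal (Zf G \<omega>) * ennreal (1 / lL \<omega>) \<partial>Ps) \<le> (\<integral>\<^sup>+\<omega>. ennreal (Y \<omega>) * ennreal (1 / lL \<omega>) \<partial>Ps)"
      using R.rearrangement(1)[OF YmP] Yp(2) cY spPs by (simp add: Zf_def[abs_def])
    hence "(\<integral>\<omega>. Zf G \<omega> \<partial>Q) \<le> (\<integral>\<omega>. Y \<omega> \<partial>Q)"
      using iZ Yp by (intro le_of_K) (auto simp: Zf_def[abs_def] Qt_nonneg)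
    thus "price r T Q (Zf G) \<le> price r T Q Y" by (rule price_mono)
  qed
  have CH: "is_cdf (cdf_of Ps X) \<and> (\<forall>x<0. cdf_of Ps X x = 0) \<and> integrable Q (Zf (cdf_of Ps X))
      \<and> (\<integral>\<omega>. Zf (cdf_of Ps X) \<omega> \<partial>Q) \<le> (\<integral>\<omega>. X \<omega> \<partial>Q)
      \<and> ((\<integral>\<omega>. Zf (cdf_of Ps X) \<omega> \<partial>Q) = (\<integral>\<omega>. X \<omega> \<partial>Q) \<longrightarrow> (AE \<omega> in Ps. X \<omega> = Zf (cdf_of Ps X) \<omega>))"
    if X: "X \<in> payoffs Q S" for X :: "'a \<Rightarrow> real"
  proof -
    note Xp = payoff_props[OF X S_nonneg]
    have XmP: "X \<in> borel_measurable Ps" by (rule meas_transfer[OF Ps(2) Xp(1)])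
    have Gc: "is_cdf (cdf_of Ps X)" unfolding cdf_of_def using XmP by (intro is_cdf_cdf) (simp add: R.real_distribution_distr)
    have Gneg: "\<forall>x<0. cdf_of Ps X x = 0"
    proof (intro allI impI)
      fix x :: real assume "x < 0"
      hence "{\<omega>\<in>space Ps. X \<omega> \<le> x} = {}" using Xp(2) spPs by force
      have "cdf_of Ps X x = measure Ps {\<omega>\<in>space Ps. X \<omega> \<le> x}" using XmP
        by (simp add: cdf_of_def cdf_def measure_distr vimage_def Int_def conj_commute)
      also have "\<dots> = 0" using \<open>{\<omega>\<in>space Ps. X \<omega> \<le> x} = {}\<close> by (metis measure_empty)
      finally show "cdf_of Ps X x = 0" .
    qed
    have le: "(\<integral>\<^sup>+\<omega>. ennreal (Zf (cdf_of Ps X) \<omega>) * ennreal (1 / lL \<omega>) \<partial>Ps) \<le> (\<integral>\<^sup>+\<omega>. ennreal (X \<omega>) * ennreal (1 / lL \<omega>) \<partial>Ps)"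
      using R.rearrangement(1)[OF XmP] Xp(2) spPs by (simp add: Zf_def[abs_def] cdf_of_def)
    have finX: "(\<integral>\<^sup>+\<omega>. ennreal (X \<omega>) * ennreal (1 / lL \<omega>) \<partial>Ps) < \<infinity>"
    proof -
      have "(\<integral>\<^sup>+\<omega>. ennreal (X \<omega>) * ennreal (1 / lL \<omega>) \<partial>Ps) = ennreal (\<integral>\<omega>. X \<omega> \<partial>Q)"
        using IntK[OF Xp(3) Xp(2)] by simp
      thus ?thesis by simp
    qed
    have iZ: "integrable Q (Zf (cdf_of Ps X))" by (rule Zint[OF Gc]) (rule le_less_trans[OF le finX])
    have zl: "(\<integral>\<omega>. Zf (cdf_of Ps X) \<omega> \<partial>Q) \<le> (\<integral>\<omega>. X \<omega> \<partial>Q)"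
      using iZ Xp le by (intro le_of_K) (auto simp: Zf_def[abs_def] Qt_nonneg)
    have "AE \<omega> in Ps. X \<omega> = Zf (cdf_of Ps X) \<omega>"
      if eq: "(\<integral>\<omega>. Zf (cdf_of Ps X) \<omega> \<partial>Q) = (\<integral>\<omega>. X \<omega> \<partial>Q)"
    proof -
      have "(\<integral>\<^sup>+\<omega>. ennreal (Zf (cdf_of Ps X) \<omega>) * ennreal (1 / lL \<omega>) \<partial>Ps) = (\<integral>\<^sup>+\<omega>. ennreal (X \<omega>) * ennreal (1 / lL \<omega>) \<partial>Ps)"
        using IntK[OF Xp(3) Xp(2)] IntK[OF iZ] eq by (simp add: Zf_def[abs_def] Qt_nonneg)
      thus ?thesis using R.rearrangement(2)[OF XmP] Xp(2) spPs finX by (simp add: Zf_def[abs_def] cdf_of_def)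
    qed
    thus ?thesis using Gc Gneg iZ zl by blast
  qed
  define Xs where "Xs = Zf F0"
  have Xs_fin: "(\<integral>\<^sup>+\<omega>. ennreal (Xs \<omega>) * ennreal (1 / lL \<omega>) \<partial>Ps) < \<infinity>"
    unfolding Xs_def Zf_def[abs_def] by (rule R.Xs_finite[OF cdf_F0 C1(2) C1(1) W2])
  have Xs_int: "integrable Q Xs" unfolding Xs_def by (rule Zint[OF cdf_F0]) (use Xs_fin in \<open>simp add: Xs_def\<close>)
  have Xs_pay: "Xs \<in> payoffs Q S" unfolding Xs_def by (rule Zpay[OF cdf_F0]) (use Xs_int in \<open>simp add: Xs_def\<close>)
  have Xs_cdf: "cdf_of Ps Xs = F0" unfolding Xs_def by (rule cdfZ[OF cdf_F0 C1(2)])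
  have Xs_ce: "cost_efficient r T Q S Ps Xs" unfolding Xs_def by (rule CE[OF cdf_F0 C1(2)]) (use Xs_int in \<open>simp add: Xs_def\<close>)
  have Xs_AE: "AE \<omega> in Ps. Xs \<omega> = quantile F0 (cdf_of Ps (lr Q Ps) (lr Q Ps \<omega>))"
    using R.AE_U
  proof eventually_elim
    case (elim \<omega>)
    thus ?case using Qt_eq_quantile[OF cdf_F0 _ _ C1(2)] by (simp add: Xs_def Zf_def[abs_def] FLeq lL_def[symmetric] cdf_of_def)
  qed
  define h where "h = quantile F0 \<circ> cdf_of Ps (lr Q Ps)"
  have hFF: "h \<in> FF" using inF by (simp add: h_def)
  have hm[measurable]: "h \<in> borel_measurable borel" using hFF FF_meas by auto
  have distr_Xs: "distr P borel Xs = distr (distr P borel lL) borel h"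
    if P: "prob_space P" "sets P = sets Q" "null_sets P = null_sets Q" for P
  proof -
    have lLP[measurable]: "lL \<in> borel_measurable P" by (rule meas_transfer[OF P(2) lLmQ])
    have XsP: "Xs \<in> borel_measurable P" using meas_transfer[OF P(2) ZfmQ[OF cdf_F0]] by (simp add: Xs_def)
    have "AE \<omega> in P. Xs \<omega> = quantile F0 (cdf_of Ps (lr Q Ps) (lr Q Ps \<omega>))"
      by (rule AE_transfer[OF _ _ Xs_AE]) (use Ps P in auto)
    hence "AE \<omega> in P. Xs \<omega> = h (lL \<omega>)" by (simp add: h_def lL_def)
    hence "distr P borel Xs = distr P borel (\<lambda>\<omega>. h (lL \<omega>))"
      by (intro distr_cong_AE) (auto simp: XsP)
    also have "\<dots> = distr (distr P borel lL) borel h"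
      by (subst distr_distr) (auto simp: comp_def)
    finally show ?thesis .
  qed
  have imXs: "interval_measure (cdf_of P Xs) = distr P borel Xs" if "prob_space P" "sets P = sets Q" for P
  proof -
    have XsP: "Xs \<in> borel_measurable P" using meas_transfer[OF that(2) ZfmQ[OF cdf_F0]] by (simp add: Xs_def)
    show ?thesis unfolding cdf_of_def
      by (rule interval_measure_cdf) (rule prob_space.real_distribution_distr[OF that(1)], simp add: XsP)
  qed
  have imlL: "interval_measure (cdf_of P lL) = distr P borel lL" if "prob_space P" "sets P = sets Q" for P
  proof -
    have lLP: "lL \<in> borel_measurable P" by (rule meas_transfer[OF that(2) lLmQ])
    show ?thesis unfolding cdf_of_def
      by (rule interval_measure_cdf) (rule prob_space.real_distribution_distr[OF that(1)], simp add: lLP)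
  qed
  have LF: "stoch_le FF (cdf_of Ps lL) (cdf_of P lL)" if "P \<in> PP" for P
    using C3 that unfolding least_favorable_def lL_def by blast
  have feas: "stoch_le FF F0 (cdf_of P Xs)" if "P \<in> PP" for P
    unfolding stoch_le_def
  proof (intro ballI impI)
    have P: "prob_space P" "sets P = sets Q" "null_sets P = null_sets Q" using PP that by auto
    fix f assume f: "f \<in> FF" and ii: "integrable (interval_measure F0) f \<and> integrable (interval_measure (cdf_of P Xs)) f"
    have fm[measurable]: "f \<in> borel_measurable borel" using f FF_meas by auto
    have fh: "f \<circ> h \<in> FF" using C2(1) f hFF unfolding composition_consistent_def by blast
    have e0: "interval_measure F0 = distr (distr Ps borel lL) borel h"
      using imXs[OF Ps(1) Ps(2)] distr_Xs[OF Ps] Xs_cdf by simp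
    have eP: "interval_measure (cdf_of P Xs) = distr (distr P borel lL) borel h"
      using imXs[OF P(1) P(2)] distr_Xs[OF P] by simp
    have lLP[measurable]: "lL \<in> borel_measurable P" by (rule meas_transfer[OF P(2) lLmQ])
    have i1: "integrable (interval_measure (cdf_of Ps lL)) (f \<circ> h)"
      using ii unfolding e0 imlL[OF Ps(1) Ps(2)] by (subst (asm) integrable_distr_eq) (auto simp: comp_def)
    have i2: "integrable (interval_measure (cdf_of P lL)) (f \<circ> h)"
      using ii unfolding eP imlL[OF P(1) P(2)] by (subst (asm) integrable_distr_eq) (auto simp: comp_def)
    have "(\<integral>x. (f \<circ> h) x \<partial>interval_measure (cdf_of Ps lL)) \<le> (\<integral>x. (f \<circ> h) x \<partial>interval_measure (cdf_of P lL))"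
      using LF[OF that] fh i1 i2 unfolding stoch_le_def by blast
    thus "(\<integral>x. f x \<partial>interval_measure F0) \<le> (\<integral>x. f x \<partial>interval_measure (cdf_of P Xs))"
      unfolding e0 eP imlL[OF Ps(1) Ps(2)] imlL[OF P(1) P(2)]
      by (subst (1 2) integral_distr) (auto simp: comp_def)
  qed
  have Xs_feas: "Xs \<in> robust_feasible Q S PP FF F0"
    unfolding robust_feasible_def using Xs_pay feas by blast
  have cmp: "(\<integral>\<omega>. Xs \<omega> \<partial>Q) \<le> (\<integral>\<omega>. Zf (cdf_of Ps X) \<omega> \<partial>Q) \<and> (\<integral>\<omega>. Zf (cdf_of Ps X) \<omega> \<partial>Q) \<le> (\<integral>\<omega>. X \<omega> \<partial>Q)
     \<and> (cdf_of Ps X \<noteq> F0 \<longrightarrow> (\<integral>\<omega>. Xs \<omega> \<partial>Q) < (\<integral>\<omega>. Zf (cdf_of Ps X) \<omega> \<partial>Q))"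
    if X: "X \<in> robust_feasible Q S PP FF F0" for X :: "'a \<Rightarrow> real"
  proof -
    have Xpay: "X \<in> payoffs Q S" and sX: "stoch_le FF F0 (cdf_of Ps X)"
      using X Ps_in unfolding robust_feasible_def by auto
    note ch = CH[OF Xpay]
    let ?Z = "Zf (cdf_of Ps X)"
    have Zp: "?Z \<in> payoffs Q S" using Zpay ch by blast
    have Zce: "cost_efficient r T Q S Ps ?Z" using CE ch by blast
    have Zc: "cdf_of Ps ?Z = cdf_of Ps X" using cdfZ ch by blast
    have "stoch_le FF (cdf_of Ps Xs) (cdf_of Ps ?Z)" using sX Xs_cdf Zc by simp
    hence pre: "cost_efficient r T Q S Ps Xs \<and> cost_efficient r T Q S Ps ?Z \<and> stoch_le FF (cdf_of Ps Xs) (cdf_of Ps ?Z)"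
      using Xs_ce Zce by simp
    have cc: "\<forall>X\<in>payoffs Q S. \<forall>Y\<in>payoffs Q S. \<forall>P\<in>PP.
        cost_efficient r T Q S P X \<and> cost_efficient r T Q S P Y \<and>
        stoch_le FF (cdf_of P X) (cdf_of P Y) \<longrightarrow>
          (\<integral>\<omega>. X \<omega> \<partial>Q) \<le> (\<integral>\<omega>. Y \<omega> \<partial>Q) \<and>
          (cdf_of P X \<noteq> cdf_of P Y \<longrightarrow> (\<integral>\<omega>. X \<omega> \<partial>Q) < (\<integral>\<omega>. Y \<omega> \<partial>Q))"
      using C2(2) unfolding cost_consistent_def .
    have "(\<integral>\<omega>. Xs \<omega> \<partial>Q) \<le> (\<integral>\<omega>. ?Z \<omega> \<partial>Q) \<and>
          (cdf_of Ps Xs \<noteq> cdf_of Ps ?Z \<longrightarrow> (\<integral>\<omega>. Xs \<omega> \<partial>Q) < (\<integral>\<omega>. ?Z \<omega> \<partial>Q))"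
      using bspec[OF bspec[OF bspec[OF cc Xs_pay] Zp] Ps_in] pre by (rule mp)
    thus ?thesis using ch Xs_cdf Zc by auto
  qed
  have sol: "robust_solution r T Q S PP FF F0 Xs"
    unfolding robust_solution_def
  proof (intro conjI ballI)
    show "Xs \<in> robust_feasible Q S PP FF F0" by (rule Xs_feas)
    fix Y assume "Y \<in> robust_feasible Q S PP FF F0"
    from cmp[OF this] show "price r T Q Xs \<le> price r T Q Y" by (intro price_mono) linarith
  qed
  have uniq: "AE \<omega> in Ps. X \<omega> = quantile F0 (cdf_of Ps (lr Q Ps) (lr Q Ps \<omega>))"
    if X: "robust_solution r T Q S PP FF F0 X" for X :: "'a \<Rightarrow> real"
  proof -
    have Xf: "X \<in> robust_feasible Q S PP FF F0" and pr: "price r T Q X \<le> price r T Q Xs"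
      using X Xs_feas unfolding robust_solution_def by auto
    have "(\<integral>\<omega>. X \<omega> \<partial>Q) \<le> (\<integral>\<omega>. Xs \<omega> \<partial>Q)" using pr unfolding price_def by simp
    moreover note c = cmp[OF Xf]
    ultimately have eqi: "(\<integral>\<omega>. Zf (cdf_of Ps X) \<omega> \<partial>Q) = (\<integral>\<omega>. X \<omega> \<partial>Q)"
      by linarith
    have eqc: "cdf_of Ps X = F0"
    proof (rule ccontr)
      assume "cdf_of Ps X \<noteq> F0"
      hence "(\<integral>\<omega>. Xs \<omega> \<partial>Q) < (\<integral>\<omega>. Zf (cdf_of Ps X) \<omega> \<partial>Q)" using c by blast
      thus False using c \<open>(\<integral>\<omega>. X \<omega> \<partial>Q) \<le> (\<integral>\<omega>. Xs \<omega> \<partial>Q)\<close> by linarith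
    qed
    have Xpay: "X \<in> payoffs Q S" using Xf unfolding robust_feasible_def by auto
    have "AE \<omega> in Ps. X \<omega> = Zf (cdf_of Ps X) \<omega>" using CH[OF Xpay] eqi by blast
    hence "AE \<omega> in Ps. X \<omega> = Xs \<omega>" using eqc by (simp add: Xs_def)
    thus ?thesis using Xs_AE by eventually_elim simp
  qed
  show ?thesis using sol Xs_AE uniq by blast
qed


end
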